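(* Let $(X_1,X_2)$ be jointly distributed random variables with finite alphabets $\mathcal{X}_1,\mathcal{X}_2$, and let $Y=(X_1,X_2)$ with alphabet $\mathcal{Y}=\mathcal{X}_1\times\mathcal{X}_2$. Then $I_\cap^2(\{X_1,X_2\};Y)=C_{GK}(X_1;X_2)\leq I(X_1;X_2)$.
   Context: For finite-valued random variables, $A-B-C$ means that $A$ and $C$ are conditionally independent given $B$. For jointly distributed finite random variables $(X_1,X_2,Y)$ define $$I_\cap^2(\{X_1,X_2\};Y)=\sup_{Q}\, I(Q;Y),$$ where the supremum is over all finite-valued random variables $Q$ jointly distributed with $(X_1,X_2,Y)$ (the marginal of $(X_1,X_2,Y)$ being fixed) such that both $Q-X_1-Y$ and $Q-X_2-Y$ are Markov chains. The Gács–Körner common information is defined as follows: consider the bipartite graph with vertex set $\mathcal{X}_1\cup\mathcal{X}_2$ (disjoint union) and an edge between $x_1$ and $x_2$ iff $p_{X_1X_2}(x_1,x_2)>0$; let $Q_*$ be the random variable equal to the index of the connected component of this graph containing the realized pair $(X_1,X_2)$ (the maximal common random variable of $X_1$ and $X_2$). Then $C_{GK}(X_1;X_2)=H(Q_* )$. $H$ and $I$ denote Shannon entropy and mutual information. *)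

theory Defs
  imports "HOL-Probability.Probability_Mass_Function"
begin

text \<open>Finite-valued random variables are represented by their (joint) probability
mass functions with finite support.  Logarithms are taken in base 2.\<close>

definition pmf_entropy :: "'a pmf \<Rightarrow> real" where
  "pmf_entropy r = - (\<Sum>x\<in>set_pmf r. pmf r x * log 2 (pmf r x))"

definition pmf_mi :: "('a \<times> 'b) pmf \<Rightarrow> real" where
  "pmf_mi r = (\<Sum>(a,b)\<in>set_pmf r.
      pmf r (a,b) * log 2 (pmf r (a,b) / (pmf (map_pmf fst r) a * pmf (map_pmf snd r) b)))"

definition markov_chain3 :: "('a \<times> 'b \<times> 'c) pmf \<Rightarrow> bool" where
  "markov_chain3 r \<longleftrightarrow> (\<forall>a b c.
      pmf r (a,b,c) * pmf (map_pmf (\<lambda>(a,b,c). b) r) b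
      = pmf (map_pmf (\<lambda>(a,b,c). (a,b)) r) (a,b) * pmf (map_pmf (\<lambda>(a,b,c). (b,c)) r) (b,c))"

text \<open>Admissible Q: joint distribution J of (Q,X1,X2), Q finite-valued (encoded in nat),
  marginal of (X1,X2) equal to p, and Q - X1 - Y, Q - X2 - Y Markov with Y = (X1,X2).\<close>
definition admissible_Q :: "('a \<times> 'b) pmf \<Rightarrow> (nat \<times> 'a \<times> 'b) pmf \<Rightarrow> bool" where
  "admissible_Q p J \<longleftrightarrow> finite (set_pmf J) \<and> map_pmf snd J = p \<and>
     markov_chain3 (map_pmf (\<lambda>(q,x1,x2). (q, x1, (x1,x2))) J) \<and>
     markov_chain3 (map_pmf (\<lambda>(q,x1,x2). (q, x2, (x1,x2))) J)"

definition I_cap2 :: "('a \<times> 'b) pmf \<Rightarrow> real" where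
  "I_cap2 p = Sup {pmf_mi (map_pmf (\<lambda>(q,x1,x2). (q,(x1,x2))) J) | J. admissible_Q p J}"

definition gk_edges :: "('a \<times> 'b) pmf \<Rightarrow> ('a + 'b) rel" where
  "gk_edges p = {(Inl a, Inr b) | a b. pmf p (a,b) > 0} \<union> {(Inr b, Inl a) | a b. pmf p (a,b) > 0}"

text \<open>Q_*: the connected component (used as its own index) containing the realized pair.\<close>
definition gk_component :: "('a \<times> 'b) pmf \<Rightarrow> 'a \<times> 'b \<Rightarrow> ('a + 'b) set" where
  "gk_component p xy = (gk_edges p)\<^sup>* `` {Inl (fst xy)}"

definition C_GK :: "('a \<times> 'b) pmf \<Rightarrow> real" where
  "C_GK p = pmf_entropy (map_pmf (gk_component p) p)"

end

theory Submission
  imports Defs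
begin

lemma exp_sum:
  assumes "finite (set_pmf M)"
  shows "measure_pmf.expectation M (f::_\<Rightarrow>real) = (\<Sum>x\<in>set_pmf M. pmf M x * f x)"
  using integral_measure_pmf_real[OF assms, where M=M and f=f] by (simp add: mult.commute)

lemma markov_fun: "markov_chain3 (map_pmf (\<lambda>x. (\<phi> (\<beta> x), \<beta> x, \<gamma> x)) M)"
  unfolding markov_chain3_def
proof (intro allI)
  fix a b c
  have e1: "map_pmf (\<lambda>(a,b,c). b) (map_pmf (\<lambda>x. (\<phi> (\<beta> x), \<beta> x, \<gamma> x)) M) = map_pmf \<beta> M"
    by (simp add: map_pmf_comp)
  have e2: "map_pmf (\<lambda>(a,b,c). (a,b)) (map_pmf (\<lambda>x. (\<phi> (\<beta> x), \<beta> x, \<gamma> x)) M) = map_pmf (\<lambda>x. (\<phi> (\<beta> x), \<beta> x)) M"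
    by (simp add: map_pmf_comp)
  have e3: "map_pmf (\<lambda>(a,b,c). (b,c)) (map_pmf (\<lambda>x. (\<phi> (\<beta> x), \<beta> x, \<gamma> x)) M) = map_pmf (\<lambda>x. (\<beta> x, \<gamma> x)) M"
    by (simp add: map_pmf_comp)
  show "pmf (map_pmf (\<lambda>x. (\<phi> (\<beta> x), \<beta> x, \<gamma> x)) M) (a, b, c) *
         pmf (map_pmf (\<lambda>(a, b, c). b) (map_pmf (\<lambda>x. (\<phi> (\<beta> x), \<beta> x, \<gamma> x)) M)) b =
         pmf (map_pmf (\<lambda>(a, b, c). (a, b)) (map_pmf (\<lambda>x. (\<phi> (\<beta> x), \<beta> x, \<gamma> x)) M)) (a, b) *
         pmf (map_pmf (\<lambda>(a, b, c). (b, c)) (map_pmf (\<lambda>x. (\<phi> (\<beta> x), \<beta> x, \<gamma> x)) M)) (b, c)"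
  proof (cases "a = \<phi> b")
    case True
    have s1: "(\<lambda>x. (\<phi> (\<beta> x), \<beta> x, \<gamma> x)) -` {(a,b,c)} = (\<lambda>x. (\<beta> x, \<gamma> x)) -` {(b,c)}"
      using True by auto
    have s2: "(\<lambda>x. (\<phi> (\<beta> x), \<beta> x)) -` {(a,b)} = \<beta> -` {b}"
      using True by auto
    show ?thesis unfolding e1 e2 e3 pmf_map s1 s2 by simp
  next
    case False
    have s1: "(\<lambda>x. (\<phi> (\<beta> x), \<beta> x, \<gamma> x)) -` {(a,b,c)} = {}"
      using False by auto
    have s2: "(\<lambda>x. (\<phi> (\<beta> x), \<beta> x)) -` {(a,b)} = {}"
      using False by auto
    show ?thesis unfolding e1 e2 e3 pmf_map s1 s2 by simp
  qed
qed

lemma comp_sym: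
  assumes "(a,b) \<in> set_pmf p"
  shows "(gk_edges p)\<^sup>* `` {Inl a} = (gk_edges p)\<^sup>* `` {Inr b}"
proof -
  have pos: "pmf p (a,b) > 0" using assms by (simp add: pmf_positive)
  have e1: "(Inl a, Inr b) \<in> gk_edges p" and e2: "(Inr b, Inl a) \<in> gk_edges p"
    using pos unfolding gk_edges_def by auto
  show ?thesis
  proof (intro equalityI subsetI)
    fix x assume "x \<in> (gk_edges p)\<^sup>* `` {Inl a}"
    then have "(Inl a, x) \<in> (gk_edges p)\<^sup>*" by auto
    then have "(Inr b, x) \<in> (gk_edges p)\<^sup>*" using e2 by (meson converse_rtrancl_into_rtrancl)
    then show "x \<in> (gk_edges p)\<^sup>* `` {Inr b}" by auto
  next
    fix x assume "x \<in> (gk_edges p)\<^sup>* `` {Inr b}"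
    then have "(Inr b, x) \<in> (gk_edges p)\<^sup>*" by auto
    then have "(Inl a, x) \<in> (gk_edges p)\<^sup>*" using e1 by (meson converse_rtrancl_into_rtrancl)
    then show "x \<in> (gk_edges p)\<^sup>* `` {Inl a}" by auto
  qed
qed

lemma countable_test: "inj (to_nat :: ('a::finite + 'b::finite) set \<Rightarrow> nat)"
  by (rule inj_to_nat)

lemma push_sum:
  assumes "finite (set_pmf M)"
  shows "(\<Sum>y\<in>set_pmf (map_pmf g M). pmf (map_pmf g M) y * (h y::real)) = (\<Sum>x\<in>set_pmf M. pmf M x * h (g x))"
proof -
  have f2: "finite (set_pmf (map_pmf g M))" using assms by simp
  show ?thesis
    using exp_sum[OF f2, of h] exp_sum[OF assms, of "\<lambda>x. h (g x)"] integral_map_pmf[of g M h]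
    by simp
qed

lemma ent_push:
  assumes "finite (set_pmf M)"
  shows "pmf_entropy (map_pmf g M) = (\<Sum>x\<in>set_pmf M. pmf M x * - log 2 (pmf (map_pmf g M) (g x)))"
  unfolding pmf_entropy_def
  using push_sum[OF assms, of g "\<lambda>y. - log 2 (pmf (map_pmf g M) y)"]
  by (simp add: sum_negf)

lemma mi_sum: "pmf_mi r = (\<Sum>z\<in>set_pmf r. pmf r z * log 2 (pmf r z / (pmf (map_pmf fst r) (fst z) * pmf (map_pmf snd r) (snd z))))"
  unfolding pmf_mi_def by (rule sum.cong) auto

lemma partC:
  fixes p :: "('a::finite \<times> 'b::finite) pmf"
  shows "C_GK p \<le> pmf_mi p"
proof -
  define C where "C = gk_component p"
  define CR where "CR = (\<lambda>b. (gk_edges p)\<^sup>* `` {Inr b})"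
  define Pc where "Pc = map_pmf C p"
  define p1 where "p1 = map_pmf fst p"
  define p2 where "p2 = map_pmf snd p"
  define f where "f = (\<lambda>y. pmf p1 (fst y) * pmf p2 (snd y) / pmf Pc (C y))"
  have fin: "finite (set_pmf p)" by simp
  have H: "C_GK p = (\<Sum>y\<in>set_pmf p. pmf p y * - log 2 (pmf Pc (C y)))"
    unfolding C_GK_def Pc_def C_def by (rule ent_push[OF fin])
  have MI: "pmf_mi p = (\<Sum>y\<in>set_pmf p. pmf p y * log 2 (pmf p y / (pmf p1 (fst y) * pmf p2 (snd y))))"
    unfolding p1_def p2_def by (rule mi_sum)
  have pos: "pmf p y > 0 \<and> pmf p1 (fst y) > 0 \<and> pmf p2 (snd y) > 0 \<and> pmf Pc (C y) > 0"
    if "y \<in> set_pmf p" for y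
    using that unfolding p1_def p2_def Pc_def by (auto intro!: pmf_positive simp: set_map_pmf)
  have trm: "pmf p y * - log 2 (pmf Pc (C y)) \<le> pmf p y * log 2 (pmf p y / (pmf p1 (fst y) * pmf p2 (snd y))) + (f y - pmf p y) / ln 2"
    if y: "y \<in> set_pmf p" for y
  proof -
    define py where "py = pmf p y"
    define P1 where "P1 = pmf p1 (fst y)"
    define P2 where "P2 = pmf p2 (snd y)"
    define Q where "Q = pmf Pc (C y)"
    have ps: "py > 0" "P1 > 0" "P2 > 0" "Q > 0" using pos[OF y] unfolding py_def P1_def P2_def Q_def by auto
    define x where "x = P1 * P2 / (Q * py)"
    have xpos: "x > 0" unfolding x_def using ps by simp
    have fy: "f y - py = py * (x - 1)" unfolding f_def x_def py_def[symmetric] P1_def[symmetric] P2_def[symmetric] Q_def[symmetric]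
      using ps by (simp add: field_simps)
    have l1: "log 2 (py / (P1 * P2)) = log 2 py - log 2 P1 - log 2 P2"
      using ps by (simp add: log_divide_pos log_mult_pos)
    have l2: "log 2 x = log 2 P1 + log 2 P2 - log 2 Q - log 2 py"
      unfolding x_def using ps by (simp add: log_divide_pos log_mult_pos)
    have l3: "log 2 x \<le> (x - 1) / ln 2"
      unfolding log_def using ln_le_minus_one[OF xpos] by (simp add: divide_right_mono)
    have l4: "py * log 2 x \<le> py * ((x - 1) / ln 2)" using mult_left_mono[OF l3] ps by simp
    have "py * - log 2 Q \<le> py * log 2 (py / (P1 * P2)) + py * (x - 1) / ln 2"
      using l4 unfolding l1 l2 by (simp add: algebra_simps)
    then show ?thesis unfolding fy py_def[symmetric] P1_def[symmetric] P2_def[symmetric] Q_def[symmetric]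
      by simp
  qed
  have sump: "(\<Sum>y\<in>set_pmf p. pmf p y) = 1" by (rule sum_pmf_eq_1) auto
  have fnn: "f y \<ge> 0" for y unfolding f_def by simp
  define D where "D = Sigma UNIV (\<lambda>a. {b. CR b = C (a,b)})"
  have sub: "set_pmf p \<subseteq> D"
  proof
    fix y assume y: "y \<in> set_pmf p"
    obtain a b where ab: "y = (a,b)" by force
    show "y \<in> D" using comp_sym[of a b p] y unfolding D_def CR_def C_def gk_component_def ab by auto
  qed
  have s1: "(\<Sum>y\<in>set_pmf p. f y) \<le> (\<Sum>y\<in>D. f y)"
    by (rule sum_mono2) (use sub fnn in auto)
  have s2: "(\<Sum>y\<in>D. f y) = (\<Sum>a\<in>UNIV. \<Sum>b\<in>{b. CR b = C (a,b)}. f (a,b))"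
    unfolding D_def by (subst sum.Sigma) auto
  have inner: "(\<Sum>b\<in>{b. CR b = C (a,b)}. f (a,b)) \<le> pmf p1 a" for a
  proof -
    define c where "c = C (a, undefined)"
    have Ca: "C (a,b) = c" for b unfolding c_def C_def gk_component_def by simp
    have "(\<Sum>b\<in>{b. CR b = c}. f (a,b)) = pmf p1 a / pmf Pc c * (\<Sum>b\<in>{b. CR b = c}. pmf p2 b)"
      unfolding f_def Ca by (simp add: sum_distrib_left)
    also have "(\<Sum>b\<in>{b. CR b = c}. pmf p2 b) = measure p {y. CR (snd y) = c}"
      unfolding p2_def by (subst measure_measure_pmf_finite[symmetric]) (auto simp: measure_map_pmf vimage_def)
    also have "\<dots> = measure p ({y. CR (snd y) = c} \<inter> set_pmf p)" by (simp add: measure_Int_set_pmf)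
    also have "{y. CR (snd y) = c} \<inter> set_pmf p = (C -` {c}) \<inter> set_pmf p"
    proof -
      have "CR (snd y) = C y" if "y \<in> set_pmf p" for y
        using sub that unfolding D_def by (cases y) auto
      then show ?thesis by auto
    qed
    also have "measure p ((C -` {c}) \<inter> set_pmf p) = pmf Pc c"
      unfolding Pc_def by (simp add: measure_Int_set_pmf pmf_map)
    finally have eq: "(\<Sum>b\<in>{b. CR b = c}. f (a,b)) = pmf p1 a / pmf Pc c * pmf Pc c" .
    show ?thesis unfolding Ca eq by (cases "pmf Pc c = 0") auto
  qed
  have s3: "(\<Sum>a\<in>UNIV. \<Sum>b\<in>{b. CR b = C (a,b)}. f (a,b)) \<le> (\<Sum>a\<in>UNIV. pmf p1 a)"
    by (rule sum_mono) (rule inner)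
  have s4: "(\<Sum>a\<in>UNIV. pmf p1 a) = 1" by (rule sum_pmf_eq_1) auto
  have sumf: "(\<Sum>y\<in>set_pmf p. f y) \<le> 1" using s1 s2 s3 s4 by linarith
  have "C_GK p \<le> (\<Sum>y\<in>set_pmf p. pmf p y * log 2 (pmf p y / (pmf p1 (fst y) * pmf p2 (snd y))) + (f y - pmf p y) / ln 2)"
    unfolding H by (rule sum_mono) (rule trm)
  also have "\<dots> = pmf_mi p + ((\<Sum>y\<in>set_pmf p. f y) - (\<Sum>y\<in>set_pmf p. pmf p y)) / ln 2"
    unfolding MI by (simp add: sum.distrib sum_divide_distrib[symmetric] sum_subtractf)
  also have "\<dots> \<le> pmf_mi p" using sumf sump by (simp add: divide_nonpos_pos)
  finally show ?thesis .
qed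

lemma partA:
  fixes p :: "('a::finite \<times> 'b::finite) pmf"
  defines "J0 \<equiv> map_pmf (\<lambda>y. (to_nat (gk_component p y), y)) p"
  shows "admissible_Q p J0 \<and> pmf_mi (map_pmf (\<lambda>(q,x1,x2). (q,(x1,x2))) J0) = C_GK p"
proof -
  define C where "C = gk_component p"
  define Pc where "Pc = map_pmf C p"
  define e where "e = (to_nat :: ('a + 'b) set \<Rightarrow> nat)"
  have J0: "J0 = map_pmf (\<lambda>y. (e (C y), y)) p" unfolding J0_def e_def C_def ..
  have m1: "map_pmf (\<lambda>(q,x1,x2). (q, x1, (x1,x2))) J0
      = map_pmf (\<lambda>y. ((\<lambda>a. e ((gk_edges p)\<^sup>* `` {Inl a})) (fst y), fst y, y)) p"
    unfolding J0 map_pmf_comp by (rule map_pmf_cong) (auto simp: C_def gk_component_def)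
  have m2: "map_pmf (\<lambda>(q,x1,x2). (q, x2, (x1,x2))) J0
      = map_pmf (\<lambda>y. ((\<lambda>b. e ((gk_edges p)\<^sup>* `` {Inr b})) (snd y), snd y, y)) p"
    unfolding J0 map_pmf_comp
  proof (rule map_pmf_cong)
    fix y assume "y \<in> set_pmf p"
    then show "(case (e (C y), y) of (q, x1, x2) \<Rightarrow> (q, x2, x1, x2)) =
          (e ((gk_edges p)\<^sup>* `` {Inr (snd y)}), snd y, y)"
      using comp_sym[of "fst y" "snd y" p] by (cases y) (auto simp: C_def gk_component_def)
  qed simp
  have msnd: "map_pmf snd J0 = p" unfolding J0 map_pmf_comp by simp
  have adm: "admissible_Q p J0"
    unfolding admissible_Q_def m1 m2 msnd
    using markov_fun[of "\<lambda>a. e ((gk_edges p)\<^sup>* `` {Inl a})" fst "\<lambda>y. y" p]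
      markov_fun[of "\<lambda>b. e ((gk_edges p)\<^sup>* `` {Inr b})" snd "\<lambda>y. y" p]
    by (simp add: J0)
  define r where "r = map_pmf (\<lambda>y. (e (C y), y)) p"
  have rJ: "map_pmf (\<lambda>(q,x1,x2). (q,(x1,x2))) J0 = r"
    unfolding J0 r_def map_pmf_comp by simp
  have injr: "inj (\<lambda>y. (e (C y), y))" by (auto intro: injI)
  have pr: "pmf r (e (C y), y) = pmf p y" for y
    unfolding r_def by (rule pmf_map_inj'[OF injr])
  have rfst: "map_pmf fst r = map_pmf e Pc" unfolding r_def Pc_def map_pmf_comp by simp
  have pfst: "pmf (map_pmf fst r) (e c) = pmf Pc c" for c
    unfolding rfst e_def by (rule pmf_map_inj'[OF inj_to_nat])
  have rsnd: "map_pmf snd r = p" unfolding r_def map_pmf_comp by simp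
  have fin: "finite (set_pmf p)" by simp
  have "pmf_mi r = (\<Sum>y\<in>set_pmf p. pmf p y * log 2 (pmf p y / (pmf Pc (C y) * pmf p y)))"
    unfolding mi_sum
    using push_sum[OF fin, of "\<lambda>y. (e (C y), y)" "\<lambda>z. log 2 (pmf r z / (pmf (map_pmf fst r) (fst z) * pmf (map_pmf snd r) (snd z)))"]
    unfolding r_def[symmetric] by (simp add: pr pfst rsnd)
  also have "\<dots> = (\<Sum>y\<in>set_pmf p. pmf p y * - log 2 (pmf Pc (C y)))"
  proof (rule sum.cong)
    fix y assume "y \<in> set_pmf p"
    then have "pmf p y > 0" by (simp add: pmf_positive)
    then have "pmf p y / (pmf Pc (C y) * pmf p y) = 1 / pmf Pc (C y)" by simp
    then show "pmf p y * log 2 (pmf p y / (pmf Pc (C y) * pmf p y)) = pmf p y * - log 2 (pmf Pc (C y))"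
      by (simp add: log_recip)
  qed simp
  also have "\<dots> = C_GK p"
    unfolding C_GK_def Pc_def C_def by (rule ent_push[OF fin, symmetric])
  finally show ?thesis using adm rJ by simp
qed

lemma partB:
  fixes p :: "('a::finite \<times> 'b::finite) pmf" and J :: "(nat \<times> 'a \<times> 'b) pmf"
  assumes adm: "admissible_Q p J"
  shows "pmf_mi (map_pmf (\<lambda>(q,x1,x2). (q,(x1,x2))) J) \<le> C_GK p"
proof -
  define g where "g = (\<lambda>(q::nat,x1::'a,x2::'b). (q,(x1,x2)))"
  define JY where "JY = map_pmf g J"
  define C where "C = gk_component p"
  define Pc where "Pc = map_pmf C p"
  define p1 where "p1 = map_pmf fst p"
  define p2 where "p2 = map_pmf snd p"
  define J1 where "J1 = map_pmf (\<lambda>(q::nat,x1::'a,x2::'b). (q,x1)) J"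
  define J2 where "J2 = map_pmf (\<lambda>(q::nat,x1::'a,x2::'b). (q,x2)) J"
  have finJ: "finite (set_pmf J)" and sndJ: "map_pmf snd J = p"
    and mk1: "markov_chain3 (map_pmf (\<lambda>(q,x1,x2). (q, x1, (x1,x2))) J)"
    and mk2: "markov_chain3 (map_pmf (\<lambda>(q,x1,x2). (q, x2, (x1,x2))) J)"
    using adm unfolding admissible_Q_def by auto
  have M1: "pmf J (q,a,b) * pmf p1 a = pmf J1 (q,a) * pmf p (a,b)" for q a b
  proof -
    define r1 where "r1 = map_pmf (\<lambda>(q::nat,x1::'a,x2::'b). (q, x1, (x1,x2))) J"
    have inj1: "inj (\<lambda>(q::nat,x1::'a,x2::'b). (q, x1, (x1,x2)))" by (auto simp: inj_def)
    have a1: "pmf r1 (q,a,(a,b)) = pmf J (q,a,b)"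
      unfolding r1_def using pmf_map_inj'[OF inj1, of J "(q,a,b)"] by simp
    have a2: "map_pmf (\<lambda>(a,b,c). b) r1 = p1"
      unfolding r1_def p1_def sndJ[symmetric] map_pmf_comp by (rule map_pmf_cong) auto
    have a3: "map_pmf (\<lambda>(a,b,c). (a,b)) r1 = J1"
      unfolding r1_def J1_def map_pmf_comp by (rule map_pmf_cong) auto
    have inj2: "inj (\<lambda>y::'a\<times>'b. (fst y, y))" by (auto simp: inj_def)
    have a4: "map_pmf (\<lambda>(a,b,c). (b,c)) r1 = map_pmf (\<lambda>y. (fst y, y)) p"
      unfolding r1_def sndJ[symmetric] map_pmf_comp by (rule map_pmf_cong) auto
    have a5: "pmf (map_pmf (\<lambda>y. (fst y, y)) p) (a,(a,b)) = pmf p (a,b)"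
      using pmf_map_inj'[OF inj2, of p "(a,b)"] by simp
    show ?thesis using mk1[unfolded markov_chain3_def r1_def[symmetric], rule_format, of q a "(a,b)"]
      unfolding a1 a2 a3 a4 a5 .
  qed
  have M2: "pmf J (q,a,b) * pmf p2 b = pmf J2 (q,b) * pmf p (a,b)" for q a b
  proof -
    define r1 where "r1 = map_pmf (\<lambda>(q::nat,x1::'a,x2::'b). (q, x2, (x1,x2))) J"
    have inj1: "inj (\<lambda>(q::nat,x1::'a,x2::'b). (q, x2, (x1,x2)))" by (auto simp: inj_def)
    have a1: "pmf r1 (q,b,(a,b)) = pmf J (q,a,b)"
      unfolding r1_def using pmf_map_inj'[OF inj1, of J "(q,a,b)"] by simp
    have a2: "map_pmf (\<lambda>(a,b,c). b) r1 = p2"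
      unfolding r1_def p2_def sndJ[symmetric] map_pmf_comp by (rule map_pmf_cong) auto
    have a3: "map_pmf (\<lambda>(a,b,c). (a,b)) r1 = J2"
      unfolding r1_def J2_def map_pmf_comp by (rule map_pmf_cong) auto
    have inj2: "inj (\<lambda>y::'a\<times>'b. (snd y, y))" by (auto simp: inj_def)
    have a4: "map_pmf (\<lambda>(a,b,c). (b,c)) r1 = map_pmf (\<lambda>y. (snd y, y)) p"
      unfolding r1_def sndJ[symmetric] map_pmf_comp by (rule map_pmf_cong) auto
    have a5: "pmf (map_pmf (\<lambda>y. (snd y, y)) p) (b,(a,b)) = pmf p (a,b)"
      using pmf_map_inj'[OF inj2, of p "(a,b)"] by simp
    show ?thesis using mk2[unfolded markov_chain3_def r1_def[symmetric], rule_format, of q b "(a,b)"]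
      unfolding a1 a2 a3 a4 a5 .
  qed
  define R where "R = (\<lambda>q u. case u of Inl a \<Rightarrow> pmf J1 (q,a) / pmf p1 a | Inr b \<Rightarrow> pmf J2 (q,b) / pmf p2 b)"
  have ratio: "pmf J (q,a,b) / pmf p (a,b) = R q (Inl a) \<and> pmf J (q,a,b) / pmf p (a,b) = R q (Inr b)"
    if pab: "pmf p (a,b) > 0" for q a b
  proof -
    have "(a,b) \<in> set_pmf p" using pab by (simp add: set_pmf_iff)
    then have "pmf p1 a > 0" "pmf p2 b > 0" unfolding p1_def p2_def
      by (auto intro!: pmf_positive simp: set_map_pmf image_iff) (force+)
    then show ?thesis using M1[of q a b] M2[of q a b] pab unfolding R_def
      by (simp add: field_simps)
  qed
  have edge: "R q u = R q v" if "(u,v) \<in> gk_edges p" for q u v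
    using that unfolding gk_edges_def by (auto, (metis ratio)+)
  have rt: "R q u = R q v" if "(u,v) \<in> (gk_edges p)\<^sup>*" for q u v
    using that by (induction rule: rtrancl_induct) (auto dest: edge[of _ _ q])
  have key: "pmf J (q, fst y, snd y) * pmf p y' = pmf J (q, fst y', snd y') * pmf p y"
    if y: "y \<in> set_pmf p" and y': "y' \<in> set_pmf p" and Cy: "C y = C y'" for q y y'
  proof -
    have "Inl (fst y') \<in> C y'" unfolding C_def gk_component_def by auto
    then have "(Inl (fst y), Inl (fst y')) \<in> (gk_edges p)\<^sup>*"
      using Cy unfolding C_def gk_component_def by auto
    then have RR: "R q (Inl (fst y)) = R q (Inl (fst y'))" by (rule rt)
    have py: "pmf p y > 0" "pmf p y' > 0" using y y' by (auto simp: pmf_positive)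
    have "pmf J (q, fst y, snd y) / pmf p y = pmf J (q, fst y', snd y') / pmf p y'"
      using ratio[of "fst y" "snd y" q] ratio[of "fst y'" "snd y'" q] py RR by simp
    then show ?thesis using py by (simp add: field_simps)
  qed
  have injg: "inj g" unfolding g_def by (auto simp: inj_def)
  have pJY: "pmf JY (q,y) = pmf J (q, fst y, snd y)" for q y
    unfolding JY_def using pmf_map_inj'[OF injg, of J "(q, fst y, snd y)"] by (simp add: g_def)
  have sndJY: "map_pmf snd JY = p"
    unfolding JY_def sndJ[symmetric] map_pmf_comp by (rule map_pmf_cong) (auto simp: g_def)
  have suppJY: "y \<in> set_pmf p" if "(q,y) \<in> set_pmf JY" for q y
  proof -
    have "y \<in> set_pmf (map_pmf snd JY)" using that by (force simp: set_map_pmf)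
    then show ?thesis unfolding sndJY .
  qed
  have ineq: "pmf JY (q,y) * pmf Pc (C y) \<le> pmf (map_pmf fst JY) q * pmf p y"
    if y: "y \<in> set_pmf p" for q y
  proof -
    define S where "S = C -` {C y}"
    have PcS: "pmf Pc (C y) = (\<Sum>y'\<in>S. pmf p y')"
      unfolding Pc_def pmf_map S_def by (rule measure_measure_pmf_finite) simp
    have "pmf JY (q,y) * pmf Pc (C y) = (\<Sum>y'\<in>S. pmf JY (q,y) * pmf p y')"
      unfolding PcS by (simp add: sum_distrib_left)
    also have "\<dots> = (\<Sum>y'\<in>S. pmf JY (q,y') * pmf p y)"
    proof (rule sum.cong)
      fix y' assume "y' \<in> S"
      then have Cy: "C y = C y'" unfolding S_def by simp
      show "pmf JY (q,y) * pmf p y' = pmf JY (q,y') * pmf p y"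
      proof (cases "y' \<in> set_pmf p")
        case True
        then show ?thesis unfolding pJY using key[OF y True Cy] by simp
      next
        case False
        then have "(q,y') \<notin> set_pmf JY" using suppJY by blast
        then show ?thesis using False by (simp add: set_pmf_iff)
      qed
    qed simp
    also have "\<dots> = pmf p y * (\<Sum>y'\<in>S. pmf JY (q,y'))" by (simp add: sum_distrib_left mult.commute)
    also have "\<dots> \<le> pmf p y * (\<Sum>y'\<in>UNIV. pmf JY (q,y'))"
      by (rule mult_left_mono) (auto intro: sum_mono2)
    also have "\<dots> \<le> pmf p y * pmf (map_pmf fst JY) q"
    proof (rule mult_left_mono)
      have "(\<Sum>y'\<in>UNIV. pmf JY (q,y')) = measure JY (range (Pair q))"
        by (subst measure_measure_pmf_finite) (auto simp: sum.reindex inj_on_def)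
      also have "\<dots> \<le> measure JY (fst -` {q})"
        by (rule measure_pmf.finite_measure_mono) auto
      also have "\<dots> = pmf (map_pmf fst JY) q" by (simp add: pmf_map)
      finally show "(\<Sum>y'\<in>UNIV. pmf JY (q,y')) \<le> pmf (map_pmf fst JY) q" .
    qed simp
    finally show ?thesis by (simp add: mult.commute)
  qed
  have finJY: "finite (set_pmf JY)" unfolding JY_def using finJ by simp
  have "pmf_mi JY = (\<Sum>z\<in>set_pmf JY. pmf JY z * log 2 (pmf JY z / (pmf (map_pmf fst JY) (fst z) * pmf p (snd z))))"
    unfolding mi_sum sndJY ..
  also have "\<dots> \<le> (\<Sum>z\<in>set_pmf JY. pmf JY z * - log 2 (pmf Pc (C (snd z))))"
  proof (rule sum_mono)
    fix z assume z: "z \<in> set_pmf JY"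
    obtain q y where zq: "z = (q,y)" by (cases z) simp
    have a: "pmf JY (q,y) > 0" using z zq by (simp add: pmf_positive)
    have yp: "y \<in> set_pmf p" using suppJY z zq by simp
    have b: "pmf (map_pmf fst JY) q > 0" using z zq by (force intro!: pmf_positive simp: set_map_pmf)
    have c: "pmf p y > 0" using yp by (simp add: pmf_positive)
    have d: "pmf Pc (C y) > 0" using yp unfolding Pc_def by (force intro!: pmf_positive simp: set_map_pmf)
    have e: "pmf JY (q,y) / (pmf (map_pmf fst JY) q * pmf p y) \<le> 1 / pmf Pc (C y)"
      using ineq[OF yp, of q] a b c d by (simp add: field_simps)
    have "log 2 (pmf JY (q,y) / (pmf (map_pmf fst JY) q * pmf p y)) \<le> log 2 (1 / pmf Pc (C y))"
      using e a b c d by (subst log_le_cancel_iff) auto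
    then have "log 2 (pmf JY (q,y) / (pmf (map_pmf fst JY) q * pmf p y)) \<le> - log 2 (pmf Pc (C y))"
      by (simp add: log_recip)
    then show "pmf JY z * log 2 (pmf JY z / (pmf (map_pmf fst JY) (fst z) * pmf p (snd z)))
        \<le> pmf JY z * - log 2 (pmf Pc (C (snd z)))"
      unfolding zq using a by (intro mult_left_mono) auto
  qed
  also have "\<dots> = (\<Sum>y\<in>set_pmf p. pmf p y * - log 2 (pmf Pc (C y)))"
    using push_sum[OF finJY, of snd "\<lambda>y. - log 2 (pmf Pc (C y))"] unfolding sndJY by simp
  also have "\<dots> = C_GK p"
    unfolding C_GK_def Pc_def C_def by (rule ent_push[symmetric]) simp
  finally show ?thesis unfolding JY_def g_def .
qed

theorem lemma8:
  fixes p :: "('a::finite \<times> 'b::finite) pmf"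
  shows "I_cap2 p = C_GK p \<and> C_GK p \<le> pmf_mi p"
proof
  show "I_cap2 p = C_GK p"
    unfolding I_cap2_def
  proof (rule cSup_eq_maximum)
    show "C_GK p \<in> {pmf_mi (map_pmf (\<lambda>(q,x1,x2). (q,(x1,x2))) J) | J. admissible_Q p J}"
      using partA[of p]
      by (intro CollectI exI[where x="map_pmf (\<lambda>y. (to_nat (gk_component p y), y)) p"]) auto
  next
    fix x assume "x \<in> {pmf_mi (map_pmf (\<lambda>(q,x1,x2). (q,(x1,x2))) J) | J. admissible_Q p J}"
    then show "x \<le> C_GK p" using partB by blast
  qed
  show "C_GK p \<le> pmf_mi p" by (rule partC)
qed

end
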